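(* Let $0<R\le\infty$ and let $\psi$ be a quasiconcave function on $[0,R)$. Then: (i) there is $C>0$ such that $(T_\psi f)^{**}(t)\le C\bigl(T_\psi f(t)+f^{**}(t)\bigr)$ for all measurable $f$ on $(0,R)$ and all $t\in(0,R)$ if and only if $\psi$ satisfies the $B$-condition; (ii) there are constants $0<c\le C$ such that $c\bigl(T_\psi f(t)+f^{**}(t)\bigr)\le T_\psi(f^{**})(t)\le C\bigl(T_\psi f(t)+f^{**}(t)\bigr)$ for all measurable $f$ on $(0,R)$ and all $t\in(0,R)$ if and only if $\psi$ satisfies the $B$-condition.
   Context: For a measurable a.e. finite function $f$ on $(0,R)$, $f^*$ is its non-increasing rearrangement, $f^*(t)=\inf\{\lambda>0: |\{x:|f(x)|>\lambda\}|\le t\}$, and $f^{**}(t)=\frac1t\int_0^t f^*(s)\,ds$. A function $\psi\colon[0,R)\to[0,\infty)$ is quasiconcave if $\psi(t)=0$ iff $t=0$, $\psi$ is non-decreasing, and $\psi(t)/t$ is non-increasing on $(0,R)$. It satisfies the $B$-condition if there is $C>0$ with $\frac1t\int_0^t \frac{ds}{\psi(s)}\le \frac{C}{\psi(t)}$ for all $t\in(0,R)$. $T_\psi f(t)=\frac{1}{\psi(t)}\sup_{t<s<R}\psi(s)f^*(s)$, $t\in(0,R)$; $T_\psi(f^{**})$ is $T_\psi$ applied to the function $f^{**}$. *)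

theory Defs
  imports "HOL-Analysis.Analysis"
begin

text \<open>The interval (0,R), with 0 < R \<le> \<infinity> encoded as an extended real.\<close>
definition Ioo0 :: "ereal \<Rightarrow> real set" where
  "Ioo0 R = {x. 0 < x \<and> ereal x < R}"

text \<open>Non-increasing rearrangement (on (0,R)) of a function with values in [0,\<infinity>];
  for a real function f one uses g = |f|. Inf of the empty set is \<infinity>.\<close>
definition rearr :: "ereal \<Rightarrow> (real \<Rightarrow> ennreal) \<Rightarrow> real \<Rightarrow> ennreal" where
  "rearr R g t = Inf {ennreal l | l. l > 0 \<and>
      emeasure lebesgue {x \<in> Ioo0 R. g x > ennreal l} \<le> ennreal t}"

definition dstar :: "ereal \<Rightarrow> (real \<Rightarrow> ennreal) \<Rightarrow> real \<Rightarrow> ennreal" where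
  "dstar R g t = (\<integral>\<^sup>+ s\<in>{0<..<t}. rearr R g s \<partial>lborel) / ennreal t"

definition Tpsi :: "ereal \<Rightarrow> (real \<Rightarrow> real) \<Rightarrow> (real \<Rightarrow> ennreal) \<Rightarrow> real \<Rightarrow> ennreal" where
  "Tpsi R \<psi> g t = (SUP s\<in>{s. t < s \<and> ereal s < R}. ennreal (\<psi> s) * rearr R g s) / ennreal (\<psi> t)"

definition quasiconcave :: "ereal \<Rightarrow> (real \<Rightarrow> real) \<Rightarrow> bool" where
  "quasiconcave R \<psi> \<longleftrightarrow>
     (\<forall>t. 0 \<le> t \<and> ereal t < R \<longrightarrow> 0 \<le> \<psi> t \<and> (\<psi> t = 0 \<longleftrightarrow> t = 0)) \<and>
     (\<forall>s t. 0 \<le> s \<and> s \<le> t \<and> ereal t < R \<longrightarrow> \<psi> s \<le> \<psi> t) \<and>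
     (\<forall>s t. 0 < s \<and> s \<le> t \<and> ereal t < R \<longrightarrow> \<psi> t / t \<le> \<psi> s / s)"

definition B_condition :: "ereal \<Rightarrow> (real \<Rightarrow> real) \<Rightarrow> bool" where
  "B_condition R \<psi> \<longleftrightarrow> (\<exists>C>0. \<forall>t \<in> Ioo0 R.
     (\<integral>\<^sup>+ s\<in>{0<..<t}. ennreal (1 / \<psi> s) \<partial>lborel) / ennreal t \<le> ennreal (C / \<psi> t))"

end

theory Submission
  imports Defs
begin


lemma div_ennreal_eq: "0 < c \<Longrightarrow> x / ennreal c = x * ennreal (1/c)"
  by (simp add: divide_ennreal_def inverse_ennreal inverse_eq_divide)

lemma lebesgue_Ioo: "a \<le> b \<Longrightarrow> emeasure lebesgue {a<..<b} = ennreal (b - a)"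
  by (simp add: emeasure_completion)

lemma lebesgue_Ioc: "a \<le> b \<Longrightarrow> emeasure lebesgue {a<..b} = ennreal (b - a)"
  by (simp add: emeasure_completion)

lemma rearr_antimono: "s \<le> t \<Longrightarrow> rearr R g t \<le> rearr R g s"
  unfolding rearr_def
  apply (rule Inf_superset_mono)
  apply clarsimp
  subgoal for l using ennreal_leI order_trans by blast
  done

lemma rearr_le:
  assumes mono: "\<And>x y. 0 < x \<Longrightarrow> x \<le> y \<Longrightarrow> ereal y < R \<Longrightarrow> g y \<le> g x"
    and t: "t \<in> Ioo0 R"
  shows "rearr R g t \<le> g t"
proof (cases "g t = top")
  case True then show ?thesis by simp
next
  case False
  show ?thesis
  proof (rule ennreal_le_epsilon)
    fix e :: real assume e: "0 < e"
    define l where "l = enn2real (g t) + e"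
    have gl: "g t + ennreal e = ennreal l"
      proof -
      have "g t = ennreal (enn2real (g t))" using False by (simp add: less_top)
      then show ?thesis using e by (metis l_def ennreal_plus enn2real_nonneg less_imp_le)
    qed
    have l0: "l > 0" using e by (simp add: l_def enn2real_nonneg add_nonneg_pos)
    have sub: "{x \<in> Ioo0 R. g x > ennreal l} \<subseteq> {0<..<t}"
    proof
      fix x assume x: "x \<in> {x \<in> Ioo0 R. g x > ennreal l}"
      show "x \<in> {0<..<t}"
      proof (rule ccontr)
        assume "x \<notin> {0<..<t}"
        with x have "t \<le> x" by (auto simp: Ioo0_def)
        with x t have "g x \<le> g t" by (intro mono) (auto simp: Ioo0_def)
        also have "\<dots> \<le> ennreal l" using gl by (metis le_iff_add)
        finally show False using x leD by blast
      qed
    qed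
    have "emeasure lebesgue {x \<in> Ioo0 R. g x > ennreal l} \<le> emeasure lebesgue {0<..<t}"
      by (rule emeasure_mono[OF sub]) simp
    also have "\<dots> = ennreal t" using t by (simp add: lebesgue_Ioo Ioo0_def)
    finally have "ennreal l \<in> {ennreal l | l. l > 0 \<and>
      emeasure lebesgue {x \<in> Ioo0 R. g x > ennreal l} \<le> ennreal t}" using l0 by blast
    then have "rearr R g t \<le> ennreal l" unfolding rearr_def by (rule Inf_lower)
    then show "rearr R g t \<le> g t + ennreal e" using gl by simp
  qed
qed

lemma levelset_meas:
  fixes g :: "real \<Rightarrow> ennreal"
  assumes mono: "\<And>x y. 0 < x \<Longrightarrow> x \<le> y \<Longrightarrow> ereal y < R \<Longrightarrow> g y \<le> g x"
  shows "{x \<in> Ioo0 R. g x > c} \<in> sets lebesgue"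
proof -
  have "is_interval {x \<in> Ioo0 R. g x > c}"
    unfolding is_interval_1
  proof (clarify, intro conjI)
    fix a b x assume a: "a \<in> Ioo0 R" "c < g a" and b: "b \<in> Ioo0 R" "c < g b" and ax: "a \<le> x" and xb: "x \<le> b"
    show "x \<in> Ioo0 R" using a b ax xb by (auto simp: Ioo0_def) (meson ereal_less_eq(3) le_less_trans)
    have "g b \<le> g x" using b a ax xb by (intro mono) (auto simp: Ioo0_def)
    then show "c < g x" using b(2) by (rule less_le_trans[rotated])
  qed
  then have "{x \<in> Ioo0 R. g x > c} \<in> sets borel" by (rule real_interval_borel_measurable)
  then show ?thesis by simp
qed

lemma rearr_ge:
  assumes mono: "\<And>x y. 0 < x \<Longrightarrow> x \<le> y \<Longrightarrow> ereal y < R \<Longrightarrow> g y \<le> g x"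
    and ts: "t < s" and s: "s \<in> Ioo0 R"
  shows "g s \<le> rearr R g t"
  unfolding rearr_def
proof (rule Inf_greatest, clarify)
  fix l :: real assume l: "0 < l" and m: "emeasure lebesgue {x \<in> Ioo0 R. ennreal l < g x} \<le> ennreal t"
  show "g s \<le> ennreal l"
  proof (rule ccontr)
    assume "\<not> g s \<le> ennreal l"
    then have gs: "ennreal l < g s" by simp
    have sub: "{0<..s} \<subseteq> {x \<in> Ioo0 R. ennreal l < g x}"
    proof
      fix x assume x: "x \<in> {0<..s}"
      then have xR: "x \<in> Ioo0 R" using s by (auto simp: Ioo0_def) (meson ereal_less_eq(3) le_less_trans)
      have "g s \<le> g x" using x s by (intro mono) (auto simp: Ioo0_def)
      then show "x \<in> {x \<in> Ioo0 R. ennreal l < g x}" using gs xR by simp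
    qed
    have "ennreal s \<le> emeasure lebesgue {x \<in> Ioo0 R. ennreal l < g x}"
      using emeasure_mono[OF sub levelset_meas[OF mono]] s by (simp add: lebesgue_Ioc Ioo0_def)
    also note m
    finally have "s \<le> t" using s by (simp add: Ioo0_def ennreal_le_iff2)
    then show False using ts by simp
  qed
qed


lemma ediv_le_iff: "0 < c \<Longrightarrow> (x / ennreal c \<le> y) \<longleftrightarrow> (x \<le> y * ennreal c)"
  by (cases x; cases y) (auto simp: divide_ennreal ennreal_mult[symmetric] field_simps ennreal_top_mult ennreal_top_divide ennreal_mult_top top_unique)

lemma ele_div_iff: "0 < c \<Longrightarrow> (y \<le> x / ennreal c) \<longleftrightarrow> (y * ennreal c \<le> x)"
  by (cases x; cases y) (auto simp: divide_ennreal ennreal_mult[symmetric] field_simps ennreal_top_mult ennreal_top_divide ennreal_mult_top top_unique)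

lemma antimono_ennreal_meas:
  fixes f :: "real \<Rightarrow> ennreal"
  assumes "\<And>x y. x \<le> y \<Longrightarrow> f y \<le> f x"
  shows "f \<in> borel_measurable borel"
proof (rule borel_measurableI_greater)
  fix c
  have "is_interval {x. c < f x}"
    unfolding is_interval_1
  proof (clarify)
    fix a b x assume "c < f a" "c < f b" "a \<le> x" "x \<le> b"
    then show "c < f x" using assms[of x b] by (meson less_le_trans)
  qed
  then show "{x \<in> space borel. c < f x} \<in> sets borel"
    using real_interval_borel_measurable by simp
qed

lemma qc_pos: "quasiconcave R \<psi> \<Longrightarrow> t \<in> Ioo0 R \<Longrightarrow> 0 < \<psi> t"
  unfolding quasiconcave_def Ioo0_def by (metis less_eq_real_def mem_Collect_eq)

lemma qc_nonneg: "quasiconcave R \<psi> \<Longrightarrow> 0 \<le> t \<Longrightarrow> ereal t < R \<Longrightarrow> 0 \<le> \<psi> t"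
  unfolding quasiconcave_def by blast

lemma qc_mono: "quasiconcave R \<psi> \<Longrightarrow> 0 \<le> s \<Longrightarrow> s \<le> t \<Longrightarrow> ereal t < R \<Longrightarrow> \<psi> s \<le> \<psi> t"
  unfolding quasiconcave_def by blast

lemma qc_ratio: "quasiconcave R \<psi> \<Longrightarrow> 0 < s \<Longrightarrow> s \<le> t \<Longrightarrow> ereal t < R \<Longrightarrow> \<psi> t * s \<le> \<psi> s * t"
proof -
  assume q: "quasiconcave R \<psi>" and s: "0 < s" "s \<le> t" "ereal t < R"
  then have "\<psi> t / t \<le> \<psi> s / s" unfolding quasiconcave_def by blast
  then show ?thesis using s by (simp add: field_simps)
qed

lemma qc_clamp_meas:
  assumes q: "quasiconcave R \<psi>" and a: "0 \<le> a" "ereal a < R"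
  shows "(\<lambda>x. \<psi> (min (max x 0) a)) \<in> borel_measurable borel"
proof (rule borel_measurable_mono, rule monoI)
  fix x y :: real assume "x \<le> y"
  then show "\<psi> (min (max x 0) a) \<le> \<psi> (min (max y 0) a)"
    using a by (intro qc_mono[OF q]) (auto simp: min_def max_def intro: le_less_trans[OF ereal_less_eq(3)[THEN iffD2]])
qed

lemma rearr_meas: "rearr R g \<in> borel_measurable borel"
  by (rule antimono_ennreal_meas) (rule rearr_antimono)

lemma F_lower: "0 \<le> t \<Longrightarrow> ennreal t * rearr R g t \<le> (\<integral>\<^sup>+ s\<in>{0<..<t}. rearr R g s \<partial>lborel)"
proof -
  assume t: "0 \<le> t"
  have "(\<integral>\<^sup>+ s\<in>{0<..<t}. rearr R g t \<partial>lborel) \<le> (\<integral>\<^sup>+ s\<in>{0<..<t}. rearr R g s \<partial>lborel)"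
    by (intro nn_integral_mono) (auto simp: indicator_def intro: rearr_antimono)
  moreover have "(\<integral>\<^sup>+ s\<in>{0<..<t}. rearr R g t \<partial>lborel) = rearr R g t * ennreal t"
    using t by (simp add: nn_integral_cmult_indicator)
  ultimately show ?thesis by (simp add: mult.commute)
qed

lemma F_mono: "(s::real) \<le> t \<Longrightarrow> (\<integral>\<^sup>+ x\<in>{0<..<s}. h x \<partial>lborel) \<le> (\<integral>\<^sup>+ x\<in>{0<..<t}. h x \<partial>lborel)"
  by (intro nn_integral_mono) (auto simp: indicator_def)

lemma F_split:
  fixes s t :: real
  assumes "h \<in> borel_measurable borel" "0 < s" "s \<le> t"
  shows "(\<integral>\<^sup>+ x\<in>{0<..<t}. h x \<partial>lborel) = (\<integral>\<^sup>+ x\<in>{0<..<s}. h x \<partial>lborel) + (\<integral>\<^sup>+ x\<in>{s..<t}. h x \<partial>lborel)"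
proof -
  have "(\<integral>\<^sup>+ x\<in>{0<..<t}. h x \<partial>lborel) = (\<integral>\<^sup>+ x. h x * indicator {0<..<s} x + h x * indicator {s..<t} x \<partial>lborel)"
    using assms by (intro nn_integral_cong) (auto simp: indicator_def)
  also have "\<dots> = (\<integral>\<^sup>+ x\<in>{0<..<s}. h x \<partial>lborel) + (\<integral>\<^sup>+ x\<in>{s..<t}. h x \<partial>lborel)"
    using assms by (intro nn_integral_add) auto
  finally show ?thesis .
qed

lemma F_step: "0 < s \<Longrightarrow> s \<le> t \<Longrightarrow>
  (\<integral>\<^sup>+ x\<in>{0<..<t}. rearr R g x \<partial>lborel) \<le> (\<integral>\<^sup>+ x\<in>{0<..<s}. rearr R g x \<partial>lborel) + ennreal (t - s) * rearr R g s"
proof -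
  assume st: "0 < s" "s \<le> t"
  have "(\<integral>\<^sup>+ x\<in>{s..<t}. rearr R g x \<partial>lborel) \<le> (\<integral>\<^sup>+ x\<in>{s..<t}. rearr R g s \<partial>lborel)"
    by (intro nn_integral_mono) (auto simp: indicator_def intro: rearr_antimono)
  also have "\<dots> = ennreal (t - s) * rearr R g s" using st by (simp add: nn_integral_cmult_indicator mult.commute)
  finally show ?thesis using F_split[OF rearr_meas, of s t R g] st by (simp add: add_left_mono)
qed


lemma divmul_ennreal: "0 < c \<Longrightarrow> x / ennreal c * ennreal c = x"
  by (cases x) (auto simp: divide_ennreal ennreal_mult[symmetric] ennreal_top_divide ennreal_top_mult)

lemma rearr_le_dstar: "0 < s \<Longrightarrow> rearr R g s \<le> dstar R g s"
  unfolding dstar_def using F_lower[of s R g] by (simp add: ele_div_iff mult.commute)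

lemma dstar_antimono:
  assumes "0 < s" "s \<le> t" shows "dstar R g t \<le> dstar R g s"
proof -
  let ?F = "\<lambda>t. \<integral>\<^sup>+ x\<in>{0<..<t}. rearr R g x \<partial>lborel"
  have Fs: "?F s = dstar R g s * ennreal s" unfolding dstar_def using assms by (simp add: divmul_ennreal)
  have "?F t \<le> ?F s + ennreal (t - s) * rearr R g s" using F_step assms by blast
  also have "\<dots> \<le> dstar R g s * ennreal s + ennreal (t - s) * dstar R g s"
    using Fs rearr_le_dstar[OF assms(1)] by (simp add: mult_left_mono)
  also have "\<dots> = dstar R g s * ennreal t"
  proof -
    have e: "ennreal s + ennreal (t - s) = ennreal t" using assms by (simp add: ennreal_plus[symmetric] del: ennreal_plus)
    show ?thesis by (metis e distrib_left mult.commute)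
  qed
  finally show ?thesis unfolding dstar_def[of R g t] using assms by (simp add: ediv_le_iff)
qed

lemma dstar_scaled:
  assumes "0 < t" "t \<le> s" shows "dstar R g t * ennreal t \<le> dstar R g s * ennreal s"
  unfolding dstar_def using assms by (simp add: divmul_ennreal F_mono)

lemma T_ge:
  assumes "t < u" "ereal u < R"
  shows "ennreal (\<psi> u) * rearr R g u / ennreal (\<psi> t) \<le> Tpsi R \<psi> g t"
  unfolding Tpsi_def using assms by (intro divide_right_mono_ennreal SUP_upper) auto

lemma T_le:
  assumes "\<And>u. t < u \<Longrightarrow> ereal u < R \<Longrightarrow> ennreal (\<psi> u) * rearr R g u \<le> B"
  shows "Tpsi R \<psi> g t \<le> B / ennreal (\<psi> t)"
  unfolding Tpsi_def using assms by (intro divide_right_mono_ennreal SUP_least) auto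

lemma ediv_antimono: "0 < b \<Longrightarrow> b \<le> a \<Longrightarrow> x / ennreal a \<le> x / ennreal b"
  by (simp add: div_ennreal_eq mult_left_mono ennreal_leI divide_left_mono)

lemma T_antimono:
  assumes q: "quasiconcave R \<psi>" and t: "t \<in> Ioo0 R" and tt: "t \<le> t'" "ereal t' < R"
  shows "Tpsi R \<psi> g t' \<le> Tpsi R \<psi> g t"
proof -
  have p: "0 < \<psi> t" using qc_pos[OF q t] .
  have m: "\<psi> t \<le> \<psi> t'" using t tt by (intro qc_mono[OF q]) (auto simp: Ioo0_def)
  have "(SUP s\<in>{s. t' < s \<and> ereal s < R}. ennreal (\<psi> s) * rearr R g s) \<le> (SUP s\<in>{s. t < s \<and> ereal s < R}. ennreal (\<psi> s) * rearr R g s)"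
    using tt by (intro SUP_subset_mono) auto
  then have "Tpsi R \<psi> g t' \<le> (SUP s\<in>{s. t < s \<and> ereal s < R}. ennreal (\<psi> s) * rearr R g s) / ennreal (\<psi> t')"
    unfolding Tpsi_def by (rule divide_right_mono_ennreal)
  also have "\<dots> \<le> Tpsi R \<psi> g t" unfolding Tpsi_def using p m by (rule ediv_antimono)
  finally show ?thesis .
qed

lemma T_mono_cond:
  assumes q: "quasiconcave R \<psi>"
  shows "\<And>x y. 0 < x \<Longrightarrow> x \<le> y \<Longrightarrow> ereal y < R \<Longrightarrow> Tpsi R \<psi> g y \<le> Tpsi R \<psi> g x"
proof -
  fix x y assume "0 < x" "x \<le> y" "ereal y < R"
  then show "Tpsi R \<psi> g y \<le> Tpsi R \<psi> g x"
    by (intro T_antimono[OF q]) (auto simp: Ioo0_def intro: le_less_trans[OF ereal_less_eq(3)[THEN iffD2]])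
qed

lemma dstar_mono_cond: "\<And>x y. 0 < x \<Longrightarrow> x \<le> y \<Longrightarrow> ereal y < R \<Longrightarrow> dstar R g y \<le> dstar R g x"
  using dstar_antimono by blast

lemma inv_psi_meas:
  assumes q: "quasiconcave R \<psi>" and a: "0 \<le> a" "ereal a < R" and A: "A \<subseteq> {0..a}" "A \<in> sets borel"
  shows "(\<lambda>s. ennreal (1 / \<psi> s) * indicator A s) \<in> borel_measurable borel"
proof -
  have m: "(\<lambda>x. \<psi> (min (max x 0) a)) \<in> borel_measurable borel" by (rule qc_clamp_meas[OF q a])
  have "(\<lambda>s. ennreal (1 / \<psi> (min (max s 0) a)) * indicator A s) \<in> borel_measurable borel"
    using m A by measurable
  moreover have "(\<lambda>s. ennreal (1 / \<psi> (min (max s 0) a)) * indicator A s) = (\<lambda>s. ennreal (1 / \<psi> s) * indicator A s)"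
    using A by (auto simp: indicator_def fun_eq_iff min_def max_def)
  ultimately show ?thesis by simp
qed


lemma ereal_lt: "x \<le> u \<Longrightarrow> ereal u < R \<Longrightarrow> ereal x < R"
  by (meson ereal_less_eq(3) le_less_trans)

definition "Gi \<psi> t = (\<integral>\<^sup>+ s\<in>{0<..<t}. ennreal (1 / \<psi> s) \<partial>lborel)"

lemma G_bound:
  assumes q: "quasiconcave R \<psi>" and K: "0 < K"
    and BK: "\<forall>t \<in> Ioo0 R. Gi \<psi> t / ennreal t \<le> ennreal (K / \<psi> t)" and u: "u \<in> Ioo0 R"
  shows "Gi \<psi> u \<le> ennreal (K * u / \<psi> u)"
proof -
  have u0: "0 < u" using u by (simp add: Ioo0_def)
  have p: "0 < \<psi> u" using qc_pos[OF q u] .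
  have "Gi \<psi> u / ennreal u \<le> ennreal (K / \<psi> u)" using BK u by blast
  then have "Gi \<psi> u \<le> ennreal (K / \<psi> u) * ennreal u" using u0 by (simp add: ediv_le_iff)
  also have "\<dots> = ennreal (K * u / \<psi> u)" using K p u0 by (simp add: ennreal_mult[symmetric])
  finally show ?thesis .
qed

lemma inv_bound:
  assumes "ennreal (\<psi> x) * a \<le> H" "0 < \<psi> x"
  shows "a \<le> H * ennreal (1 / \<psi> x)"
proof -
  have "a = ennreal (\<psi> x) * a * ennreal (1 / \<psi> x)"
    using assms(2) by (simp add: mult.commute mult.left_commute ennreal_mult[symmetric])
  also have "\<dots> \<le> H * ennreal (1 / \<psi> x)" using assms(1) by (rule mult_right_mono) simp
  finally show ?thesis .
qed

lemma F_upper: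
  fixes g :: "real \<Rightarrow> ennreal"
  assumes q: "quasiconcave R \<psi>" and t: "t \<in> Ioo0 R" and tu: "t < u" "ereal u < R"
  defines "H \<equiv> (SUP s\<in>{s. t < s \<and> ereal s < R}. ennreal (\<psi> s) * rearr R g s)"
  shows "(\<integral>\<^sup>+ x\<in>{0<..<u}. rearr R g x \<partial>lborel) \<le> (\<integral>\<^sup>+ x\<in>{0<..<t}. rearr R g x \<partial>lborel) + H * Gi \<psi> u"
proof -
  have t0: "0 < t" using t by (simp add: Ioo0_def)
  have u0: "0 \<le> u" using t0 tu by simp
  have "(\<integral>\<^sup>+ x\<in>{t..<u}. rearr R g x \<partial>lborel) \<le> (\<integral>\<^sup>+ x. H * (ennreal (1 / \<psi> x) * indicator {0<..<u} x) \<partial>lborel)"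
  proof (rule nn_integral_mono_AE)
    show "AE x in lborel. rearr R g x * indicator {t..<u} x \<le> H * (ennreal (1 / \<psi> x) * indicator {0<..<u} x)"
      using AE_lborel_singleton[of t]
    proof eventually_elim
      case (elim x)
      show ?case
      proof (cases "x \<in> {t..<u}")
        case True
        then have x: "t < x" "x < u" using elim by auto
        have xR: "x \<in> Ioo0 R" using x t0 tu by (auto simp: Ioo0_def intro: ereal_lt[of x u])
        have "ennreal (\<psi> x) * rearr R g x \<le> H" unfolding H_def using x xR by (intro SUP_upper) (auto simp: Ioo0_def)
        then have "rearr R g x \<le> H * ennreal (1 / \<psi> x)" using qc_pos[OF q xR] by (rule inv_bound)
        then show ?thesis using True x t0 by (simp add: indicator_def)
      qed simp
    qed
  qed
  also have "\<dots> = H * Gi \<psi> u"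
  proof -
    have m: "(\<lambda>x. ennreal (1 / \<psi> x) * indicator {0<..<u} x) \<in> borel_measurable borel"
      by (rule inv_psi_meas[OF q u0 tu(2)]) auto
    show ?thesis unfolding Gi_def using m by (simp add: nn_integral_cmult)
  qed
  finally show ?thesis using F_split[OF rearr_meas t0 less_imp_le[OF tu(1)]] by (simp add: add_left_mono)
qed


lemma cancel_psi: "0 < p \<Longrightarrow> ennreal p * x / ennreal p = x"
  by (simp add: div_ennreal_eq mult.commute mult.left_commute ennreal_mult[symmetric])

lemma ennreal_div_split: "0 \<le> a \<Longrightarrow> 0 < b \<Longrightarrow> ennreal (a / b) = ennreal a * ennreal (1 / b)"
  by (simp add: ennreal_mult[symmetric])

lemma ii_upper:
  fixes g :: "real \<Rightarrow> ennreal"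
  assumes q: "quasiconcave R \<psi>" and K: "0 < K"
    and BK: "\<forall>t \<in> Ioo0 R. Gi \<psi> t / ennreal t \<le> ennreal (K / \<psi> t)" and t: "t \<in> Ioo0 R"
  shows "Tpsi R \<psi> (dstar R g) t \<le> ennreal (1 + K) * (Tpsi R \<psi> g t + dstar R g t)"
proof -
  define H where "H = (SUP s\<in>{s. t < s \<and> ereal s < R}. ennreal (\<psi> s) * rearr R g s)"
  let ?F = "\<lambda>t. \<integral>\<^sup>+ x\<in>{0<..<t}. rearr R g x \<partial>lborel"
  have pt: "0 < \<psi> t" using qc_pos[OF q t] .
  have t0: "0 < t" using t by (simp add: Ioo0_def)
  have key: "ennreal (\<psi> u) * rearr R (dstar R g) u \<le> ennreal (\<psi> t) * dstar R g t + ennreal K * H"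
    if tu: "t < u" "ereal u < R" for u
  proof -
    have uR: "u \<in> Ioo0 R" using tu t0 by (simp add: Ioo0_def)
    have u0: "0 < u" using tu t0 by simp
    have pu: "0 < \<psi> u" using qc_pos[OF q uR] .
    have 1: "rearr R (dstar R g) u \<le> dstar R g u" by (rule rearr_le[OF dstar_mono_cond uR])
    have 2: "dstar R g u = ?F u * ennreal (1/u)" unfolding dstar_def using u0 by (simp add: div_ennreal_eq)
    have 3: "?F u \<le> ?F t + H * Gi \<psi> u" unfolding H_def by (rule F_upper[OF q t tu])
    have 4: "Gi \<psi> u \<le> ennreal (K * u / \<psi> u)" by (rule G_bound[OF q K BK uR])
    have 5: "\<psi> u / u \<le> \<psi> t / t"
      using qc_ratio[OF q t0 less_imp_le[OF tu(1)] tu(2)] t0 u0 by (simp add: field_simps)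
    have 6: "ennreal (\<psi> t / t) * ?F t = ennreal (\<psi> t) * dstar R g t"
    proof -
      have "ennreal (\<psi> t / t) = ennreal (\<psi> t) * ennreal (1 / t)" using t0 pt by (simp add: ennreal_mult[symmetric])
      then show ?thesis unfolding dstar_def using t0 by (simp add: div_ennreal_eq mult.commute mult.left_commute mult.assoc)
    qed
    have 7: "ennreal (\<psi> u / u) * ennreal (K * u / \<psi> u) = ennreal K"
      using u0 pu K by (simp add: ennreal_mult[symmetric])
    have "ennreal (\<psi> u) * rearr R (dstar R g) u \<le> ennreal (\<psi> u) * (?F u * ennreal (1/u))"
      using 1 2 by (simp add: mult_left_mono)
    also have "\<dots> = ennreal (\<psi> u / u) * ?F u"
      using u0 pu by (subst ennreal_div_split[of "\<psi> u" u]) (auto simp: mult.assoc mult.commute mult.left_commute)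
    also have "\<dots> \<le> ennreal (\<psi> u / u) * (?F t + H * Gi \<psi> u)" using 3 by (rule mult_left_mono) simp
    also have "\<dots> = ennreal (\<psi> u / u) * ?F t + H * (ennreal (\<psi> u / u) * Gi \<psi> u)"
      by (simp add: distrib_left mult.commute mult.left_commute)
    also have "\<dots> \<le> ennreal (\<psi> t / t) * ?F t + H * (ennreal (\<psi> u / u) * ennreal (K * u / \<psi> u))"
      using 4 5 by (intro add_mono mult_left_mono mult_right_mono ennreal_leI) auto
    also have "\<dots> = ennreal (\<psi> t) * dstar R g t + ennreal K * H" using 6 7 by (simp add: mult.commute)
    finally show ?thesis .
  qed
  have "Tpsi R \<psi> (dstar R g) t \<le> (ennreal (\<psi> t) * dstar R g t + ennreal K * H) / ennreal (\<psi> t)"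
    by (rule T_le) (rule key)
  also have "\<dots> = dstar R g t + ennreal K * Tpsi R \<psi> g t"
    unfolding add_divide_distrib_ennreal Tpsi_def H_def[symmetric] using pt
    by (simp add: cancel_psi ennreal_times_divide)
  also have "\<dots> \<le> ennreal (1 + K) * (Tpsi R \<psi> g t + dstar R g t)"
  proof -
    have "dstar R g t \<le> ennreal (1 + K) * dstar R g t"
      using K by (intro mult_right_mono[of 1 _ "dstar R g t", simplified]) (simp add: ennreal_1[symmetric] del: ennreal_1)
    moreover have "ennreal K * Tpsi R \<psi> g t \<le> ennreal (1 + K) * Tpsi R \<psi> g t"
      using K by (intro mult_right_mono ennreal_leI) auto
    ultimately show ?thesis by (simp add: distrib_left add.commute add_mono)
  qed
  finally show ?thesis .
qed


lemma ecancel_right: "0 < c \<Longrightarrow> x * ennreal c \<le> y * ennreal c \<Longrightarrow> x \<le> y"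
  using ele_div_iff[of c x "y * ennreal c"] cancel_psi[of c y] by (simp add: mult.commute)

lemma exists_between:
  assumes t: "t \<in> Ioo0 R" shows "\<exists>s. t < s \<and> s \<le> 2 * t \<and> ereal s < R"
proof -
  have "ereal t < R" using t by (simp add: Ioo0_def)
  then obtain z where z: "ereal t < ereal z" "ereal z < R" using ereal_dense2 by blast
  have t0: "0 < t" using t by (simp add: Ioo0_def)
  have "ereal (min z (2 * t)) < R" by (rule ereal_lt[of _ z]) (simp_all add: z)
  then show ?thesis using z t0 by (intro exI[of _ "min z (2 * t)"]) auto
qed

lemma lower_T:
  assumes q: "quasiconcave R \<psi>" and t: "t \<in> Ioo0 R"
  shows "Tpsi R \<psi> g t \<le> 2 * Tpsi R \<psi> (dstar R g) t"
proof -
  have t0: "0 < t" using t by (simp add: Ioo0_def)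
  define H' where "H' = (SUP s\<in>{s. t < s \<and> ereal s < R}. ennreal (\<psi> s) * rearr R (dstar R g) s)"
  have "(SUP s\<in>{s. t < s \<and> ereal s < R}. ennreal (\<psi> s) * rearr R g s) \<le> 2 * H'"
  proof (rule SUP_least, clarify)
    fix s' assume s': "t < s'" "ereal s' < R"
    define s where "s = (t + s') / 2"
    have ss: "t < s" "s < s'" "s' \<le> 2 * s" using s' t0 by (auto simp: s_def)
    have sR: "ereal s < R" using ss s' by (intro ereal_lt[of s s']) auto
    have s'I: "s' \<in> Ioo0 R" using s' t0 by (simp add: Ioo0_def)
    have 1: "dstar R g s' \<le> rearr R (dstar R g) s" by (rule rearr_ge[OF dstar_mono_cond ss(2) s'I])
    have 2: "rearr R g s' \<le> dstar R g s'" using s' t0 by (intro rearr_le_dstar) simp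
    have 3: "\<psi> s' \<le> 2 * \<psi> s"
    proof -
      have "\<psi> s' * s \<le> \<psi> s * s'" using qc_ratio[OF q _ _ s'(2), of s] ss t0 by simp
      moreover have "0 \<le> \<psi> s'" using qc_nonneg[OF q _ s'(2)] s' t0 by simp
      then have "\<psi> s' * s' \<le> \<psi> s' * (2 * s)" using ss by (intro mult_left_mono) auto
      moreover have "\<psi> s' * (2 * s) = 2 * (\<psi> s' * s)" "(2 * \<psi> s) * s' = 2 * (\<psi> s * s')" by simp_all
      ultimately have "\<psi> s' * s' \<le> (2 * \<psi> s) * s'" by linarith
      then show ?thesis using s' t0 by simp
    qed
    have p: "0 \<le> \<psi> s" using qc_nonneg[OF q _ sR] ss t0 by simp
    have "ennreal (\<psi> s') * rearr R g s' \<le> ennreal (2 * \<psi> s) * rearr R (dstar R g) s"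
      using 1 2 3 by (intro mult_mono ennreal_leI) auto
    also have "\<dots> = 2 * (ennreal (\<psi> s) * rearr R (dstar R g) s)" using p by (simp add: ennreal_mult mult.assoc)
    also have "\<dots> \<le> 2 * H'" unfolding H'_def using ss sR by (intro mult_left_mono SUP_upper) auto
    finally show "ennreal (\<psi> s') * rearr R g s' \<le> 2 * H'" .
  qed
  then have "Tpsi R \<psi> g t \<le> 2 * H' / ennreal (\<psi> t)" unfolding Tpsi_def by (rule divide_right_mono_ennreal)
  also have "\<dots> = 2 * Tpsi R \<psi> (dstar R g) t" unfolding Tpsi_def H'_def by (simp add: ennreal_times_divide)
  finally show ?thesis .
qed

lemma lower_D:
  assumes q: "quasiconcave R \<psi>" and t: "t \<in> Ioo0 R"
  shows "dstar R g t \<le> 2 * Tpsi R \<psi> (dstar R g) t"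
proof -
  have t0: "0 < t" using t by (simp add: Ioo0_def)
  obtain s' where s': "t < s'" "s' \<le> 2 * t" "ereal s' < R" using exists_between[OF t] by blast
  define s where "s = (t + s') / 2"
  have ss: "t < s" "s < s'" using s' by (auto simp: s_def)
  have sR: "ereal s < R" using ss s' by (intro ereal_lt[of s s']) auto
  have s'I: "s' \<in> Ioo0 R" using s' t0 by (simp add: Ioo0_def)
  have pt: "0 < \<psi> t" using qc_pos[OF q t] .
  have m: "\<psi> t \<le> \<psi> s" using ss t0 sR by (intro qc_mono[OF q]) auto
  have 1: "dstar R g s' \<le> rearr R (dstar R g) s" by (rule rearr_ge[OF dstar_mono_cond ss(2) s'I])
  have "dstar R g t * ennreal t \<le> dstar R g s' * ennreal s'" using dstar_scaled t0 s' by simp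
  also have "\<dots> \<le> dstar R g s' * ennreal (2 * t)" using s' by (intro mult_left_mono ennreal_leI) auto
  also have "\<dots> = (2 * dstar R g s') * ennreal t" using t0 by (simp add: ennreal_mult mult.commute mult.left_commute)
  finally have 2: "dstar R g t \<le> 2 * dstar R g s'" using t0 by (rule ecancel_right[rotated])
  have "dstar R g s' = ennreal (\<psi> t) * dstar R g s' / ennreal (\<psi> t)" using pt by (simp add: cancel_psi)
  also have "\<dots> \<le> ennreal (\<psi> s) * rearr R (dstar R g) s / ennreal (\<psi> t)"
    using 1 m by (intro divide_right_mono_ennreal mult_mono ennreal_leI) auto
  also have "\<dots> \<le> Tpsi R \<psi> (dstar R g) t" using ss sR by (intro T_ge) auto
  finally show ?thesis using 2 by (meson order_trans mult_left_mono zero_le)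
qed

lemma ii_lower:
  assumes q: "quasiconcave R \<psi>" and t: "t \<in> Ioo0 R"
  shows "ennreal (1/4) * (Tpsi R \<psi> g t + dstar R g t) \<le> Tpsi R \<psi> (dstar R g) t"
proof -
  have "Tpsi R \<psi> g t + dstar R g t \<le> 4 * Tpsi R \<psi> (dstar R g) t"
    using add_mono[OF lower_T[OF q t, of g] lower_D[OF q t, of g]] by (simp add: distrib_right[symmetric])
  then have "ennreal (1/4) * (Tpsi R \<psi> g t + dstar R g t) \<le> ennreal (1/4) * (4 * Tpsi R \<psi> (dstar R g) t)"
    by (rule mult_left_mono) simp
  also have "\<dots> = Tpsi R \<psi> (dstar R g) t"
    by (simp add: mult.assoc[symmetric] ennreal_numeral[symmetric] ennreal_mult[symmetric] del: ennreal_numeral)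
  finally show ?thesis .
qed


lemma prod_ind_meas:
  "(\<lambda>(s, v). (indicator {s/2<..<(t::real)} v :: ennreal)) \<in> borel_measurable (lborel \<Otimes>\<^sub>M lborel)"
proof -
  have "(\<lambda>(s, v). (indicator {s/2<..<(t::real)} v :: ennreal)) = (\<lambda>x. if fst x / 2 < snd x \<and> snd x < t then 1 else 0)"
    by (auto simp: fun_eq_iff indicator_def)
  moreover have "(\<lambda>x::real\<times>real. if fst x / 2 < snd x \<and> snd x < t then 1 else (0::ennreal)) \<in> borel_measurable (lborel \<Otimes>\<^sub>M lborel)"
    by measurable
  ultimately show ?thesis by simp
qed

lemma S1_aux:
  fixes g :: "real \<Rightarrow> ennreal"
  assumes q: "quasiconcave R \<psi>" and u0: "0 < u" and uR: "ereal u < R"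
    and su: "s < u" and ut: "u \<le> t" and tR: "ereal t < R"
    and wc: "\<And>v. 0 < v \<Longrightarrow> v \<le> t \<Longrightarrow> wc v = ennreal (\<psi> v / v) * rearr R g v"
  shows "ennreal (\<psi> u) * rearr R g u \<le> 2 * (\<integral>\<^sup>+ v. wc v * indicator {s/2<..<t} v \<partial>lborel)"
proof -
  have "ennreal (\<psi> u / u) * rearr R g u * ennreal (u/2) = (\<integral>\<^sup>+ v. ennreal (\<psi> u / u) * rearr R g u * indicator {u/2<..<u} v \<partial>lborel)"
    using u0 by (simp add: nn_integral_cmult_indicator)
  also have "\<dots> \<le> (\<integral>\<^sup>+ v. wc v * indicator {s/2<..<t} v \<partial>lborel)"
  proof (intro nn_integral_mono)
    fix v
    show "ennreal (\<psi> u / u) * rearr R g u * indicator {u/2<..<u} v \<le> wc v * indicator {s/2<..<t} v"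
    proof (cases "v \<in> {u/2<..<u}")
      case True
      then have v: "0 < v" "v \<le> u" "s/2 < v" "v < t" using u0 su ut by auto
      have "\<psi> u / u \<le> \<psi> v / v" using q v uR unfolding quasiconcave_def by blast
      moreover have "rearr R g u \<le> rearr R g v" using v by (intro rearr_antimono)
      ultimately have "ennreal (\<psi> u / u) * rearr R g u \<le> wc v"
        using wc[of v] v by (auto intro!: mult_mono ennreal_leI)
      then show ?thesis using True v by (simp add: indicator_def)
    qed simp
  qed
  finally have 1: "ennreal (\<psi> u / u) * rearr R g u * ennreal (u/2) \<le> (\<integral>\<^sup>+ v. wc v * indicator {s/2<..<t} v \<partial>lborel)" .
  have pu: "0 \<le> \<psi> u" using qc_nonneg[OF q _ uR] u0 by simp
  have "ennreal (\<psi> u) * rearr R g u = 2 * (ennreal (\<psi> u / u) * rearr R g u * ennreal (u/2))"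
  proof -
    have "2 * ennreal (\<psi> u / u) * ennreal (u/2) = ennreal (\<psi> u)"
      using u0 pu by (simp add: ennreal_mult[symmetric] ennreal_numeral[symmetric] del: ennreal_numeral)
    then show ?thesis by (metis mult.commute mult.left_commute)
  qed
  with 1 show ?thesis by (simp add: mult_left_mono)
qed


lemma P_aux:
  assumes q: "quasiconcave R \<psi>" and K: "0 < K"
    and BK: "\<forall>t \<in> Ioo0 R. Gi \<psi> t / ennreal t \<le> ennreal (K / \<psi> t)" and t: "t \<in> Ioo0 R"
    and wc: "\<And>v. 0 < v \<Longrightarrow> v \<le> t \<Longrightarrow> wc v = ennreal (\<psi> v / v) * \<phi> v"
    and psc: "\<And>x. 0 \<le> x \<Longrightarrow> x \<le> t \<Longrightarrow> \<psi>c x = \<psi> x"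
  shows "(\<integral>\<^sup>+ s. wc v * indicator {s/2<..<t} v * (ennreal (1 / \<psi>c s) * indicator {0<..<t} s) \<partial>lborel)
     \<le> ennreal (2 * K) * (\<phi> v * indicator {0<..<t} v)"
proof (cases "0 < v \<and> v < t")
  case True
  have t0: "0 < t" and tR: "ereal t < R" using t by (auto simp: Ioo0_def)
  define m where "m = min (2 * v) t"
  have m: "0 < m" "m \<le> 2 * v" "m \<le> t" "v \<le> m" using True by (auto simp: m_def)
  have mR: "ereal m < R" using m tR by (intro ereal_lt[of m t]) auto
  have mI: "m \<in> Ioo0 R" using m mR by (simp add: Ioo0_def)
  have vI: "v \<in> Ioo0 R" using True tR by (simp add: Ioo0_def ereal_lt[of v t])
  have pv: "0 < \<psi> v" using qc_pos[OF q vI] .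
  have pm: "\<psi> v \<le> \<psi> m" using m True mR by (intro qc_mono[OF q]) auto
  have "(\<integral>\<^sup>+ s. wc v * indicator {s/2<..<t} v * (ennreal (1 / \<psi>c s) * indicator {0<..<t} s) \<partial>lborel)
      = (\<integral>\<^sup>+ s. wc v * (ennreal (1 / \<psi> s) * indicator {0<..<m} s) \<partial>lborel)"
  proof (intro nn_integral_cong)
    fix s
    show "wc v * indicator {s/2<..<t} v * (ennreal (1 / \<psi>c s) * indicator {0<..<t} s)
        = wc v * (ennreal (1 / \<psi> s) * indicator {0<..<m} s)"
    proof (cases "0 < s \<and> s < m")
      case True
      then show ?thesis using \<open>0 < v \<and> v < t\<close> m psc[of s] by (auto simp: indicator_def m_def)
    next
      case False
      then show ?thesis using \<open>0 < v \<and> v < t\<close> by (auto simp: indicator_def m_def)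
    qed
  qed
  also have "\<dots> = wc v * Gi \<psi> m"
  proof -
    have "(\<lambda>s. ennreal (1 / \<psi> s) * indicator {0<..<m} s) \<in> borel_measurable borel"
      using m mR by (intro inv_psi_meas[OF q]) auto
    then show ?thesis unfolding Gi_def by (simp add: nn_integral_cmult)
  qed
  also have "\<dots> \<le> wc v * ennreal (2 * K * v / \<psi> v)"
  proof (rule mult_left_mono)
    have "Gi \<psi> m \<le> ennreal (K * m / \<psi> m)" by (rule G_bound[OF q K BK mI])
    also have "\<dots> \<le> ennreal (2 * K * v / \<psi> v)"
    proof (rule ennreal_leI)
      have "K * m / \<psi> m \<le> K * m / \<psi> v" using pv pm K m by (intro divide_left_mono) auto
      also have "\<dots> \<le> 2 * K * v / \<psi> v" using pv K m by (intro divide_right_mono) auto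
      finally show "K * m / \<psi> m \<le> 2 * K * v / \<psi> v" .
    qed
    finally show "Gi \<psi> m \<le> ennreal (2 * K * v / \<psi> v)" .
  qed simp
  also have "\<dots> = ennreal (2 * K) * (\<phi> v * indicator {0<..<t} v)"
  proof -
    have "ennreal (\<psi> v / v) * ennreal (2 * K * v / \<psi> v) = ennreal (2 * K)"
      using pv True K by (simp add: ennreal_mult[symmetric])
    then show ?thesis using True wc[of v] by (simp add: indicator_def mult.assoc[symmetric]) (metis mult.commute mult.left_commute)
  qed
  finally show ?thesis .
next
  case False
  have "(\<integral>\<^sup>+ s. wc v * indicator {s/2<..<t} v * (ennreal (1 / \<psi>c s) * indicator {0<..<t} s) \<partial>lborel)
      = (\<integral>\<^sup>+ (s::real). 0 \<partial>lborel)"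
    using False by (intro nn_integral_cong) (auto simp: indicator_def)
  then show ?thesis by simp
qed


lemma i_upper:
  fixes g :: "real \<Rightarrow> ennreal"
  assumes q: "quasiconcave R \<psi>" and K: "0 < K"
    and BK: "\<forall>t \<in> Ioo0 R. Gi \<psi> t / ennreal t \<le> ennreal (K / \<psi> t)" and t: "t \<in> Ioo0 R"
  shows "dstar R (Tpsi R \<psi> g) t \<le> ennreal (4 * K) * (Tpsi R \<psi> g t + dstar R g t)"
proof -
  have t0: "0 < t" and tR: "ereal t < R" using t by (auto simp: Ioo0_def)
  have pt: "0 < \<psi> t" using qc_pos[OF q t] .
  define \<phi> where "\<phi> = rearr R g"
  have \<phi>_meas: "\<phi> \<in> borel_measurable borel" unfolding \<phi>_def by (rule rearr_meas)
  define \<psi>c where "\<psi>c = (\<lambda>x. \<psi> (min (max x 0) t))"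
  have psc: "\<And>x. 0 \<le> x \<Longrightarrow> x \<le> t \<Longrightarrow> \<psi>c x = \<psi> x" by (simp add: \<psi>c_def)
  have psc_meas: "\<psi>c \<in> borel_measurable borel" unfolding \<psi>c_def using t0 tR by (intro qc_clamp_meas[OF q]) auto
  define wc where "wc = (\<lambda>v. ennreal (\<psi>c v / v) * \<phi> v)"
  have wc: "\<And>v. 0 < v \<Longrightarrow> v \<le> t \<Longrightarrow> wc v = ennreal (\<psi> v / v) * \<phi> v" by (simp add: wc_def psc)
  have wc_meas: "wc \<in> borel_measurable borel" unfolding wc_def using psc_meas \<phi>_meas by measurable
  define A where "A = (\<lambda>s. \<integral>\<^sup>+ v. wc v * indicator {s/2<..<t} v \<partial>lborel)"
  define H where "H = (SUP s\<in>{s. t < s \<and> ereal s < R}. ennreal (\<psi> s) * rearr R g s)"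
  define e where "e = (\<lambda>s. ennreal (1 / \<psi> s) * indicator {0<..<t} s)"
  have e_meas: "e \<in> borel_measurable borel" unfolding e_def using t0 tR by (intro inv_psi_meas[OF q]) auto
  have A_meas: "A \<in> borel_measurable borel"
  proof (rule antimono_ennreal_meas)
    fix x y :: real assume "x \<le> y"
    then show "A y \<le> A x" unfolding A_def by (intro nn_integral_mono) (auto simp: indicator_def)
  qed
  have S1: "Tpsi R \<psi> g s \<le> (H + 2 * A s) * ennreal (1 / \<psi> s)" if s: "0 < s" "s < t" for s
  proof -
    have sI: "s \<in> Ioo0 R" using s tR by (simp add: Ioo0_def ereal_lt[of s t])
    have ps: "0 < \<psi> s" using qc_pos[OF q sI] .
    have "Tpsi R \<psi> g s \<le> (H + 2 * A s) / ennreal (\<psi> s)"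
    proof (rule T_le)
      fix u assume u: "s < u" "ereal u < R"
      show "ennreal (\<psi> u) * rearr R g u \<le> H + 2 * A s"
      proof (cases "t < u")
        case True
        then have "ennreal (\<psi> u) * rearr R g u \<le> H" unfolding H_def using u by (intro SUP_upper) auto
        then show ?thesis by (simp add: add_increasing2)
      next
        case False
        then have "ennreal (\<psi> u) * rearr R g u \<le> 2 * A s"
          unfolding A_def using s u by (intro S1_aux[OF q _ u(2) u(1) _ tR]) (auto simp: wc \<phi>_def)
        then show ?thesis by (simp add: add_increasing)
      qed
    qed
    then show ?thesis using ps by (simp add: div_ennreal_eq)
  qed
  have S2: "(\<integral>\<^sup>+ s\<in>{0<..<t}. Tpsi R \<psi> g s \<partial>lborel) \<le> (\<integral>\<^sup>+ s. H * e s + 2 * (A s * e s) \<partial>lborel)"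
  proof (intro nn_integral_mono)
    fix s
    show "Tpsi R \<psi> g s * indicator {0<..<t} s \<le> H * e s + 2 * (A s * e s)"
    proof (cases "0 < s \<and> s < t")
      case True
      then show ?thesis using S1[of s] by (simp add: e_def distrib_right mult.assoc)
    qed (simp add: e_def)
  qed
  also have "\<dots> = H * Gi \<psi> t + 2 * (\<integral>\<^sup>+ s. A s * e s \<partial>lborel)"
    using e_meas A_meas by (simp add: nn_integral_add nn_integral_cmult Gi_def e_def)
  finally have S2': "(\<integral>\<^sup>+ s\<in>{0<..<t}. Tpsi R \<psi> g s \<partial>lborel) \<le> H * Gi \<psi> t + 2 * (\<integral>\<^sup>+ s. A s * e s \<partial>lborel)" .
  define f where "f = (\<lambda>s v. wc v * indicator {s/2<..<t} v * (ennreal (1 / \<psi>c s) * indicator {0<..<t} s))"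
  have f_meas: "case_prod f \<in> borel_measurable (lborel \<Otimes>\<^sub>M lborel)"
  proof -
    have 1: "(\<lambda>(s, v). (indicator {s/2<..<(t::real)} v :: ennreal)) \<in> borel_measurable (lborel \<Otimes>\<^sub>M lborel)"
      by (rule prod_ind_meas)
    have "(\<lambda>x. wc (snd x) * (case x of (s, v) \<Rightarrow> indicator {s/2<..<t} v) * (ennreal (1 / \<psi>c (fst x)) * indicator {0<..<t} (fst x))) \<in> borel_measurable (lborel \<Otimes>\<^sub>M lborel)"
      using 1 wc_meas psc_meas by measurable
    moreover have "case_prod f = (\<lambda>x. wc (snd x) * (case x of (s, v) \<Rightarrow> indicator {s/2<..<t} v) * (ennreal (1 / \<psi>c (fst x)) * indicator {0<..<t} (fst x)))"
      by (auto simp: f_def fun_eq_iff)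
    ultimately show ?thesis by simp
  qed
  have S3: "(\<integral>\<^sup>+ s. A s * e s \<partial>lborel) \<le> ennreal (2 * K) * (\<integral>\<^sup>+ v\<in>{0<..<t}. \<phi> v \<partial>lborel)"
  proof -
    have "(\<integral>\<^sup>+ s. A s * e s \<partial>lborel) = (\<integral>\<^sup>+ s. (\<integral>\<^sup>+ v. f s v \<partial>lborel) \<partial>lborel)"
    proof (intro nn_integral_cong)
      fix s
      have es: "e s = ennreal (1 / \<psi>c s) * indicator {0<..<t} s"
        by (cases "0 < s \<and> s < t") (auto simp: e_def indicator_def psc)
      have "A s * e s = (\<integral>\<^sup>+ v. wc v * indicator {s/2<..<t} v * e s \<partial>lborel)"
        unfolding A_def using wc_meas by (intro nn_integral_multc[symmetric]) auto
      then show "A s * e s = (\<integral>\<^sup>+ v. f s v \<partial>lborel)" by (simp add: f_def es)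
    qed
    also have "\<dots> = (\<integral>\<^sup>+ v. (\<integral>\<^sup>+ s. f s v \<partial>lborel) \<partial>lborel)"
      using lborel_pair.Fubini'[OF f_meas] by simp
    also have "\<dots> \<le> (\<integral>\<^sup>+ v. ennreal (2 * K) * (\<phi> v * indicator {0<..<t} v) \<partial>lborel)"
      unfolding f_def by (intro nn_integral_mono P_aux[OF q K BK t]) (auto simp: wc psc)
    also have "\<dots> = ennreal (2 * K) * (\<integral>\<^sup>+ v\<in>{0<..<t}. \<phi> v \<partial>lborel)"
      using \<phi>_meas by (simp add: nn_integral_cmult)
    finally show ?thesis .
  qed
  have GB: "Gi \<psi> t \<le> ennreal (K * t / \<psi> t)" by (rule G_bound[OF q K BK t])
  have "dstar R (Tpsi R \<psi> g) t \<le> (\<integral>\<^sup>+ s\<in>{0<..<t}. Tpsi R \<psi> g s \<partial>lborel) / ennreal t"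
    unfolding dstar_def
  proof (intro divide_right_mono_ennreal nn_integral_mono)
    fix s
    show "rearr R (Tpsi R \<psi> g) s * indicator {0<..<t} s \<le> Tpsi R \<psi> g s * indicator {0<..<t} s"
    proof (cases "0 < s \<and> s < t")
      case True
      then have "s \<in> Ioo0 R" using tR by (simp add: Ioo0_def ereal_lt[of s t])
      have "rearr R (Tpsi R \<psi> g) s \<le> Tpsi R \<psi> g s"
        using \<open>s \<in> Ioo0 R\<close> by (intro rearr_le[of R "Tpsi R \<psi> g" s]) (auto intro: T_mono_cond[OF q])
      then show ?thesis by (simp add: indicator_def)
    qed (auto simp: indicator_def)
  qed
  also have "\<dots> \<le> (H * ennreal (K * t / \<psi> t) + ennreal (4 * K) * (\<integral>\<^sup>+ v\<in>{0<..<t}. \<phi> v \<partial>lborel)) / ennreal t"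
  proof (intro divide_right_mono_ennreal order_trans[OF S2'] add_mono mult_left_mono GB)
    have "2 * (\<integral>\<^sup>+ s. A s * e s \<partial>lborel) \<le> 2 * (ennreal (2 * K) * (\<integral>\<^sup>+ v\<in>{0<..<t}. \<phi> v \<partial>lborel))"
      using S3 by (rule mult_left_mono) simp
    also have "\<dots> = ennreal (4 * K) * (\<integral>\<^sup>+ v\<in>{0<..<t}. \<phi> v \<partial>lborel)"
      using K by (simp add: mult.assoc[symmetric] ennreal_numeral[symmetric] ennreal_mult[symmetric] del: ennreal_numeral)
    finally show "2 * (\<integral>\<^sup>+ s. A s * e s \<partial>lborel) \<le> ennreal (4 * K) * (\<integral>\<^sup>+ v\<in>{0<..<t}. \<phi> v \<partial>lborel)" .
  qed simp_all
  also have "\<dots> = ennreal K * Tpsi R \<psi> g t + ennreal (4 * K) * dstar R g t"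
  proof -
    have a: "H * ennreal (K * t / \<psi> t) / ennreal t = ennreal K * Tpsi R \<psi> g t"
    proof -
      have "ennreal (K * t / \<psi> t) * ennreal (1 / t) = ennreal K * ennreal (1 / \<psi> t)"
        using K t0 pt by (simp add: ennreal_mult[symmetric])
      then show ?thesis unfolding Tpsi_def H_def[symmetric] using t0 pt
        by (simp add: div_ennreal_eq mult.assoc) (metis mult.commute mult.left_commute)
    qed
    have b: "ennreal (4 * K) * (\<integral>\<^sup>+ v\<in>{0<..<t}. \<phi> v \<partial>lborel) / ennreal t = ennreal (4 * K) * dstar R g t"
      unfolding dstar_def \<phi>_def by (simp add: ennreal_times_divide)
    show ?thesis by (simp add: add_divide_distrib_ennreal a b)
  qed
  also have "\<dots> \<le> ennreal (4 * K) * (Tpsi R \<psi> g t + dstar R g t)"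
    using K by (simp add: distrib_left add_right_mono mult_right_mono ennreal_leI)
  finally show ?thesis .
qed


lemma qc_scale:
  assumes q: "quasiconcave R \<psi>" and "0 < x" "x \<le> y" "ereal y < R" "y \<le> k * x"
  shows "\<psi> y \<le> k * \<psi> x"
proof -
  have 1: "\<psi> y * x \<le> \<psi> x * y" by (rule qc_ratio[OF q assms(2-4)])
  have "0 \<le> \<psi> x" using qc_nonneg[OF q _ ereal_lt[OF assms(3,4)]] assms by simp
  then have "\<psi> x * y \<le> \<psi> x * (k * x)" using assms by (intro mult_left_mono) auto
  with 1 have "\<psi> y * x \<le> (k * \<psi> x) * x" by (simp add: algebra_simps)
  then show ?thesis using assms(2) by simp
qed

lemma Gi_split:
  assumes q: "quasiconcave R \<psi>" and ab: "0 < a" "a \<le> b" "ereal b < R"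
  shows "Gi \<psi> b = Gi \<psi> a + (\<integral>\<^sup>+ x. ennreal (1 / \<psi> x) * indicator {a..<b} x \<partial>lborel)"
proof -
  have m1: "(\<lambda>x. ennreal (1 / \<psi> x) * indicator {0<..<a} x) \<in> borel_measurable borel"
    using ab by (intro inv_psi_meas[OF q, of b]) auto
  have m2: "(\<lambda>x. ennreal (1 / \<psi> x) * indicator {a..<b} x) \<in> borel_measurable borel"
    using ab by (intro inv_psi_meas[OF q, of b]) auto
  have "Gi \<psi> b = (\<integral>\<^sup>+ x. ennreal (1 / \<psi> x) * indicator {0<..<a} x + ennreal (1 / \<psi> x) * indicator {a..<b} x \<partial>lborel)"
    unfolding Gi_def using ab
    by (intro nn_integral_cong) (auto simp: indicator_def)
  also have "\<dots> = Gi \<psi> a + (\<integral>\<^sup>+ x. ennreal (1 / \<psi> x) * indicator {a..<b} x \<partial>lborel)"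
    unfolding Gi_def using m1 m2 by (simp add: nn_integral_add)
  finally show ?thesis .
qed

lemma Gi_tail:
  assumes q: "quasiconcave R \<psi>" and ab: "0 < a" "a \<le> b" "ereal b < R" "b \<le> k * a" "0 < k"
  shows "(\<integral>\<^sup>+ x. ennreal (1 / \<psi> x) * indicator {a..<b} x \<partial>lborel) \<le> ennreal (k * (b - a) / \<psi> b)"
proof -
  have bI: "b \<in> Ioo0 R" using ab by (simp add: Ioo0_def)
  have pb: "0 < \<psi> b" using qc_pos[OF q bI] .
  have "(\<integral>\<^sup>+ x. ennreal (1 / \<psi> x) * indicator {a..<b} x \<partial>lborel) \<le> (\<integral>\<^sup>+ x. ennreal (k / \<psi> b) * indicator {a..<b} x \<partial>lborel)"
  proof (intro nn_integral_mono)
    fix x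
    show "ennreal (1 / \<psi> x) * indicator {a..<b} x \<le> ennreal (k / \<psi> b) * indicator {a..<b} x"
    proof (cases "x \<in> {a..<b}")
      case True
      then have x: "0 < x" "x \<le> b" "b \<le> k * x" using ab by (auto intro: order_trans mult_left_mono)
      have "\<psi> b \<le> k * \<psi> x" by (rule qc_scale[OF q x(1,2) ab(3) x(3)])
      moreover have "0 < \<psi> x" using x ab by (intro qc_pos[OF q]) (simp add: Ioo0_def ereal_lt[of x b])
      ultimately have "1 / \<psi> x \<le> k / \<psi> b" using pb ab by (simp add: field_simps)
      then show ?thesis using True by (simp add: ennreal_leI)
    qed simp
  qed
  also have "\<dots> = ennreal (k * (b - a) / \<psi> b)"
    using ab pb by (simp add: nn_integral_cmult_indicator ennreal_mult[symmetric])
  finally show ?thesis .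
qed


lemma indicator_abs_ennreal: "(\<lambda>x. ennreal \<bar>indicator {0<..<t0} x :: real\<bar>) = indicator {0<..<t0}"
  by (auto simp: indicator_def fun_eq_iff)

lemma meas_restrict: "(f :: real \<Rightarrow> real) \<in> borel_measurable borel \<Longrightarrow> f \<in> borel_measurable (restrict_space lebesgue (Ioo0 R))"
  by (intro measurable_restrict_space1 measurable_completion) simp

lemma i_rev:
  assumes q: "quasiconcave R \<psi>" and C: "0 < C"
    and hyp: "\<forall>f :: real \<Rightarrow> real. f \<in> borel_measurable (restrict_space lebesgue (Ioo0 R)) \<longrightarrow>
             (\<forall>t \<in> Ioo0 R.
               dstar R (Tpsi R \<psi> (\<lambda>x. ennreal \<bar>f x\<bar>)) t
                 \<le> ennreal C * (Tpsi R \<psi> (\<lambda>x. ennreal \<bar>f x\<bar>) t + dstar R (\<lambda>x. ennreal \<bar>f x\<bar>) t))"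
  shows "B_condition R \<psi>"
  unfolding B_condition_def
proof (intro exI[of _ "2 * C + 3"] conjI ballI)
  show "0 < 2 * C + 3" using C by simp
  fix t0 assume t0I: "t0 \<in> Ioo0 R"
  have t0: "0 < t0" and tR: "ereal t0 < R" using t0I by (auto simp: Ioo0_def)
  have pt: "0 < \<psi> t0" using qc_pos[OF q t0I] .
  define g :: "real \<Rightarrow> ennreal" where "g = indicator {0<..<t0}"
  have gm: "\<And>x y. 0 < x \<Longrightarrow> x \<le> y \<Longrightarrow> ereal y < R \<Longrightarrow> g y \<le> g x"
    by (auto simp: g_def indicator_def)
  have main: "dstar R (Tpsi R \<psi> g) t0 \<le> ennreal C * (Tpsi R \<psi> g t0 + dstar R g t0)"
  proof -
    have "(indicator {0<..<t0} :: real \<Rightarrow> real) \<in> borel_measurable (restrict_space lebesgue (Ioo0 R))"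
      by (intro meas_restrict) simp
    with hyp t0I show ?thesis unfolding g_def indicator_abs_ennreal[symmetric] by blast
  qed
  have T0: "Tpsi R \<psi> g t0 = 0"
  proof -
    have "Tpsi R \<psi> g t0 \<le> 0 / ennreal (\<psi> t0)"
    proof (rule T_le)
      fix u assume u: "t0 < u" "ereal u < R"
      then have "rearr R g u \<le> g u" using t0 by (intro rearr_le[OF gm]) (auto simp: Ioo0_def)
      then show "ennreal (\<psi> u) * rearr R g u \<le> 0" using u by (simp add: g_def)
    qed
    then show ?thesis by simp
  qed
  have D1: "dstar R g t0 \<le> 1"
  proof -
    have "(\<integral>\<^sup>+ s\<in>{0<..<t0}. rearr R g s \<partial>lborel) \<le> (\<integral>\<^sup>+ s. 1 * indicator {0<..<t0} s \<partial>lborel)"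
    proof (intro nn_integral_mono)
      fix s
      show "rearr R g s * indicator {0<..<t0} s \<le> 1 * indicator {0<..<t0} s"
      proof (cases "0 < s \<and> s < t0")
        case True
        then have "s \<in> Ioo0 R" using tR ereal_lt[of s t0] by (simp add: Ioo0_def)
        then have "rearr R g s \<le> g s" by (intro rearr_le[OF gm])
        then show ?thesis using True by (simp add: g_def)
      qed (auto simp: indicator_def)
    qed
    also have "\<dots> = ennreal t0" using t0 by (simp add: nn_integral_cmult_indicator)
    finally show ?thesis unfolding dstar_def using t0 by (simp add: ediv_le_iff)
  qed
  have up: "dstar R (Tpsi R \<psi> g) t0 \<le> ennreal C"
    using main T0 D1 by (metis add_0 mult_left_mono mult.right_neutral order_trans zero_le)
  have low: "ennreal (\<psi> t0 / 2) * Gi \<psi> (t0/4) \<le> (\<integral>\<^sup>+ s\<in>{0<..<t0}. rearr R (Tpsi R \<psi> g) s \<partial>lborel)"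
  proof -
    have "ennreal (\<psi> t0 / 2) * Gi \<psi> (t0/4) = (\<integral>\<^sup>+ s. ennreal (\<psi> t0 / 2) * (ennreal (1 / \<psi> s) * indicator {0<..<t0/4} s) \<partial>lborel)"
    proof -
      have "(\<lambda>s. ennreal (1 / \<psi> s) * indicator {0<..<t0/4} s) \<in> borel_measurable borel"
        using t0 tR by (intro inv_psi_meas[OF q, of t0]) auto
      then show ?thesis unfolding Gi_def by (simp add: nn_integral_cmult)
    qed
    also have "\<dots> \<le> (\<integral>\<^sup>+ s\<in>{0<..<t0}. rearr R (Tpsi R \<psi> g) s \<partial>lborel)"
    proof (intro nn_integral_mono)
      fix s
      show "ennreal (\<psi> t0 / 2) * (ennreal (1 / \<psi> s) * indicator {0<..<t0/4} s) \<le> rearr R (Tpsi R \<psi> g) s * indicator {0<..<t0} s"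
      proof (cases "0 < s \<and> s < t0/4")
        case True
        then have s: "0 < s" "s < t0/4" by auto
        define s' where "s' = 3 * s / 2"
        define u where "u = 3 * t0 / 4"
        have uR: "ereal u < R" using tR t0 by (intro ereal_lt[of u t0]) (auto simp: u_def)
        have s'R: "ereal s' < R" using tR s by (intro ereal_lt[of s' t0]) (auto simp: s'_def)
        have s'I: "s' \<in> Ioo0 R" using s s'R by (simp add: Ioo0_def s'_def)
        have sI: "s \<in> Ioo0 R" using s tR by (simp add: Ioo0_def ereal_lt[of s t0])
        have ps: "0 < \<psi> s" using qc_pos[OF q sI] .
        have ps': "0 < \<psi> s'" using qc_pos[OF q s'I] .
        have pu: "0 < \<psi> u" using uR t0 by (intro qc_pos[OF q]) (simp add: Ioo0_def u_def)
        have a1: "\<psi> s' \<le> 3/2 * \<psi> s" using s s'R by (intro qc_scale[OF q]) (auto simp: s'_def)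
        have a2: "\<psi> t0 \<le> 4/3 * \<psi> u" using t0 tR by (intro qc_scale[OF q]) (auto simp: u_def)
        have r1: "\<psi> t0 / 2 * (1 / \<psi> s) \<le> \<psi> u / \<psi> s'"
        proof -
          have "\<psi> t0 / 2 * (1 / \<psi> s) = \<psi> t0 / (2 * \<psi> s)" by simp
          also have "\<dots> \<le> (4/3 * \<psi> u) / (2 * \<psi> s)" using a2 ps by (intro divide_right_mono) auto
          also have "\<dots> = \<psi> u / (3/2 * \<psi> s)" by simp
          also have "\<dots> \<le> \<psi> u / \<psi> s'" using a1 ps' pu by (intro divide_left_mono) auto
          finally show ?thesis .
        qed
        have g1: "1 \<le> rearr R g u"
        proof -
          have "g (7 * t0 / 8) \<le> rearr R g u"
            using t0 tR by (intro rearr_ge[OF gm]) (auto simp: u_def Ioo0_def intro: ereal_lt[of _ t0])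
          then show ?thesis using t0 by (simp add: g_def)
        qed
        have "ennreal (\<psi> t0 / 2) * (ennreal (1 / \<psi> s) * indicator {0<..<t0/4} s) = ennreal (\<psi> t0 / 2 * (1 / \<psi> s))"
          using True pt ps by (simp add: ennreal_mult[symmetric] del: times_divide_eq_right)
        also have "\<dots> \<le> ennreal (\<psi> u / \<psi> s')" using r1 by (rule ennreal_leI)
        also have "\<dots> = ennreal (\<psi> u) * 1 / ennreal (\<psi> s')" using pu ps' by (simp add: divide_ennreal)
        also have "\<dots> \<le> ennreal (\<psi> u) * rearr R g u / ennreal (\<psi> s')"
          using g1 by (intro divide_right_mono_ennreal mult_left_mono) auto
        also have "\<dots> \<le> Tpsi R \<psi> g s'" using s t0 uR by (intro T_ge) (auto simp: s'_def u_def)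
        also have "\<dots> \<le> rearr R (Tpsi R \<psi> g) s" using s s'I by (intro rearr_ge[OF T_mono_cond[OF q]]) (auto simp: s'_def)
        finally show ?thesis using True by (simp add: indicator_def)
      qed simp
    qed
    finally show ?thesis .
  qed
  have G4: "Gi \<psi> (t0/4) \<le> ennreal (2 * C * t0 / \<psi> t0)"
  proof -
    have "ennreal (\<psi> t0 / 2) * Gi \<psi> (t0/4) \<le> ennreal C * ennreal t0"
      using order_trans[OF low] up t0 unfolding dstar_def by (simp add: ediv_le_iff)
    then have "ennreal (2 / \<psi> t0) * (ennreal (\<psi> t0 / 2) * Gi \<psi> (t0/4)) \<le> ennreal (2 / \<psi> t0) * (ennreal C * ennreal t0)"
      by (rule mult_left_mono) simp
    moreover have "ennreal (2 / \<psi> t0) * (ennreal (\<psi> t0 / 2) * Gi \<psi> (t0/4)) = Gi \<psi> (t0/4)"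
      using pt by (simp add: mult.assoc[symmetric] ennreal_mult[symmetric])
    moreover have "ennreal (2 / \<psi> t0) * (ennreal C * ennreal t0) = ennreal (2 * C * t0 / \<psi> t0)"
      using pt C t0 by (simp add: ennreal_mult[symmetric])
    ultimately show ?thesis by simp
  qed
  have "Gi \<psi> t0 = Gi \<psi> (t0/4) + (\<integral>\<^sup>+ x. ennreal (1 / \<psi> x) * indicator {t0/4..<t0} x \<partial>lborel)"
    using t0 tR by (intro Gi_split[OF q]) auto
  also have "\<dots> \<le> ennreal (2 * C * t0 / \<psi> t0) + ennreal (4 * (t0 - t0/4) / \<psi> t0)"
    using t0 tR by (intro add_mono G4 Gi_tail[OF q]) auto
  also have "\<dots> = ennreal ((2 * C + 3) / \<psi> t0) * ennreal t0"
    using t0 pt C by (simp add: ennreal_mult[symmetric] ennreal_plus[symmetric] field_simps del: ennreal_plus)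
  finally show "(\<integral>\<^sup>+ s\<in>{0<..<t0}. ennreal (1 / \<psi> s) \<partial>lborel) / ennreal t0 \<le> ennreal ((2 * C + 3) / \<psi> t0)"
    unfolding Gi_def using t0 by (simp add: ediv_le_iff)
qed


lemma ii_rev_J:
  assumes q: "quasiconcave R \<psi>" and C: "0 < C"
    and hyp: "\<forall>f :: real \<Rightarrow> real. f \<in> borel_measurable (restrict_space lebesgue (Ioo0 R)) \<longrightarrow>
             (\<forall>t \<in> Ioo0 R. Tpsi R \<psi> (dstar R (\<lambda>x. ennreal \<bar>f x\<bar>)) t
                 \<le> ennreal C * (Tpsi R \<psi> (\<lambda>x. ennreal \<bar>f x\<bar>) t + dstar R (\<lambda>x. ennreal \<bar>f x\<bar>) t))"
    and aI: "a \<in> Ioo0 R" and t: "0 < t" "t < a/2"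
  shows "(\<integral>\<^sup>+ x. ennreal (1 / \<psi> x) * indicator {t<..<a/2} x \<partial>lborel) \<le> ennreal (8 * C * a / \<psi> a)"
proof -
  have a0: "0 < a" and aR: "ereal a < R" using aI by (auto simp: Ioo0_def)
  have pa: "0 < \<psi> a" using qc_pos[OF q aI] .
  have tI: "t \<in> Ioo0 R" using t aR by (simp add: Ioo0_def ereal_lt[of t a])
  have pt: "0 < \<psi> t" using qc_pos[OF q tI] .
  have pos: "\<And>x. 0 < x \<Longrightarrow> x < a \<Longrightarrow> 0 < \<psi> (max x t)"
    using t aR by (intro qc_pos[OF q]) (auto simp: Ioo0_def max_def intro: ereal_lt[of _ a])
  define f where "f = (\<lambda>x. if 0 < x \<and> x < a then 1 / \<psi> (max x t) else 0)"
  define g where "g = (\<lambda>x. ennreal \<bar>f x\<bar>)"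
  have g_eq: "\<And>x. 0 < x \<Longrightarrow> x < a \<Longrightarrow> g x = ennreal (1 / \<psi> (max x t))"
  proof -
    fix x :: real assume x: "0 < x" "x < a"
    then have "0 < \<psi> (max x t)" by (rule pos)
    then show "g x = ennreal (1 / \<psi> (max x t))" using x by (simp add: g_def f_def abs_of_pos)
  qed
  have g_out: "\<And>x. \<not> (0 < x \<and> x < a) \<Longrightarrow> g x = 0" by (auto simp: g_def f_def)
  have f_meas: "f \<in> borel_measurable (restrict_space lebesgue (Ioo0 R))"
  proof (rule meas_restrict)
    define \<psi>c where "\<psi>c = (\<lambda>x. \<psi> (min (max x 0) a))"
    have m: "\<psi>c \<in> borel_measurable borel" unfolding \<psi>c_def using a0 aR by (intro qc_clamp_meas[OF q]) auto
    have "(\<lambda>x. if 0 < x \<and> x < a then 1 / \<psi>c (max x t) else 0) \<in> borel_measurable borel"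
      using m by measurable
    moreover have "(\<lambda>x. if 0 < x \<and> x < a then 1 / \<psi>c (max x t) else 0) = f"
      using t by (auto simp: fun_eq_iff f_def \<psi>c_def max_def min_def)
    ultimately show "f \<in> borel_measurable borel" by simp
  qed
  have gm: "\<And>x y. 0 < x \<Longrightarrow> x \<le> y \<Longrightarrow> ereal y < R \<Longrightarrow> g y \<le> g x"
  proof -
    fix x y :: real assume xy: "0 < x" "x \<le> y" "ereal y < R"
    show "g y \<le> g x"
    proof (cases "y < a")
      case True
      have "\<psi> (max x t) \<le> \<psi> (max y t)" using xy t True aR
        by (intro qc_mono[OF q]) (auto simp: max_def intro: ereal_lt[of _ a])
      then have "1 / \<psi> (max y t) \<le> 1 / \<psi> (max x t)" using pos[of x] xy True
        by (intro divide_left_mono) auto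
      then show ?thesis using g_eq[of x] g_eq[of y] xy True by (simp add: ennreal_leI)
    next
      case False then show ?thesis using g_out[of y] by simp
    qed
  qed
  have up: "Tpsi R \<psi> (dstar R g) t \<le> ennreal C * (Tpsi R \<psi> g t + dstar R g t)"
    using hyp f_meas tI unfolding g_def by blast
  have Tg: "Tpsi R \<psi> g t \<le> ennreal (1 / \<psi> t)"
  proof -
    have "Tpsi R \<psi> g t \<le> 1 / ennreal (\<psi> t)"
    proof (rule T_le)
      fix u assume u: "t < u" "ereal u < R"
      have uI: "u \<in> Ioo0 R" using u t by (simp add: Ioo0_def)
      have "rearr R g u \<le> g u" by (rule rearr_le[OF gm uI])
      then have "ennreal (\<psi> u) * rearr R g u \<le> ennreal (\<psi> u) * g u" by (rule mult_left_mono) simp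
      also have "\<dots> \<le> 1"
      proof (cases "u < a")
        case True
        have "0 < \<psi> u" using qc_pos[OF q uI] .
        then show ?thesis using g_eq[of u] True u t by (simp add: ennreal_mult[symmetric] max_def)
      next
        case False then show ?thesis using g_out[of u] by simp
      qed
      finally show "ennreal (\<psi> u) * rearr R g u \<le> 1" .
    qed
    then show ?thesis using pt by (simp add: divide_ennreal[symmetric])
  qed
  have Dg: "dstar R g t \<le> ennreal (1 / \<psi> t)"
  proof -
    have "(\<integral>\<^sup>+ s\<in>{0<..<t}. rearr R g s \<partial>lborel) \<le> (\<integral>\<^sup>+ s. ennreal (1 / \<psi> t) * indicator {0<..<t} s \<partial>lborel)"
    proof (intro nn_integral_mono)
      fix s
      show "rearr R g s * indicator {0<..<t} s \<le> ennreal (1 / \<psi> t) * indicator {0<..<t} s"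
      proof (cases "0 < s \<and> s < t")
        case True
        then have sI: "s \<in> Ioo0 R" using tI by (simp add: Ioo0_def ereal_lt[of s t])
        have "rearr R g s \<le> g s" by (rule rearr_le[OF gm sI])
        also have "\<dots> = ennreal (1 / \<psi> t)" using g_eq[of s] True t by (simp add: max_def)
        finally show ?thesis using True by simp
      qed auto
    qed
    also have "\<dots> = ennreal (1 / \<psi> t) * ennreal t" using t by (simp add: nn_integral_cmult_indicator)
    finally show ?thesis unfolding dstar_def using t by (simp add: ediv_le_iff)
  qed
  have rhs: "Tpsi R \<psi> (dstar R g) t \<le> ennreal (2 * C / \<psi> t)"
  proof -
    have "Tpsi R \<psi> (dstar R g) t \<le> ennreal C * (ennreal (1 / \<psi> t) + ennreal (1 / \<psi> t))"
      using up Tg Dg by (meson add_mono mult_left_mono order_trans zero_le)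
    also have "\<dots> = ennreal (2 * C / \<psi> t)" using C pt
      by (simp add: ennreal_plus[symmetric] ennreal_mult[symmetric] del: ennreal_plus)
    finally show ?thesis .
  qed
  define J where "J = (\<integral>\<^sup>+ x. ennreal (1 / \<psi> x) * indicator {t<..<a/2} x \<partial>lborel)"
  define s where "s = 3 * a / 4"
  have s: "t < s" "s < a" "a \<le> 2 * s" using t a0 by (auto simp: s_def)
  have sR: "ereal s < R" using s aR by (intro ereal_lt[of s a]) auto
  have psa: "\<psi> a \<le> 2 * \<psi> s" using s a0 t aR by (intro qc_scale[OF q]) auto
  have Jlow: "ennreal (1/2) * J \<le> (\<integral>\<^sup>+ x\<in>{0<..<a}. rearr R g x \<partial>lborel)"
  proof -
    have "ennreal (1/2) * J = (\<integral>\<^sup>+ x. ennreal (1/2) * (ennreal (1 / \<psi> x) * indicator {t<..<a/2} x) \<partial>lborel)"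
    proof -
      have "(\<lambda>x. ennreal (1 / \<psi> x) * indicator {t<..<a/2} x) \<in> borel_measurable borel"
        using a0 aR t by (intro inv_psi_meas[OF q, of a]) auto
      then show ?thesis unfolding J_def by (simp add: nn_integral_cmult)
    qed
    also have "\<dots> \<le> (\<integral>\<^sup>+ x\<in>{0<..<a}. rearr R g x \<partial>lborel)"
    proof (intro nn_integral_mono)
      fix x
      show "ennreal (1/2) * (ennreal (1 / \<psi> x) * indicator {t<..<a/2} x) \<le> rearr R g x * indicator {0<..<a} x"
      proof (cases "t < x \<and> x < a/2")
        case True
        have x0: "0 < x" using True t by simp
        have xI: "x \<in> Ioo0 R" using True x0 aR by (simp add: Ioo0_def ereal_lt[of x a])
        have px: "0 < \<psi> x" using qc_pos[OF q xI] .
        have x2I: "2 * x \<in> Ioo0 R" using True x0 aR by (simp add: Ioo0_def ereal_lt[of "2*x" a])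
        have p2: "0 < \<psi> (2 * x)" using qc_pos[OF q x2I] .
        have sc: "\<psi> (2 * x) \<le> 2 * \<psi> x" using True x0 x2I by (intro qc_scale[OF q]) (auto simp: Ioo0_def)
        have "ennreal (1/2) * ennreal (1 / \<psi> x) = ennreal (1 / (2 * \<psi> x))"
          using px by (subst ennreal_mult[symmetric]) auto
        also have "\<dots> \<le> ennreal (1 / \<psi> (2 * x))" using sc p2 by (intro ennreal_leI divide_left_mono) auto
        also have "\<dots> = g (2 * x)" using g_eq[of "2*x"] True x0 by (simp add: max_def)
        also have "\<dots> \<le> rearr R g x" using x0 x2I by (intro rearr_ge[OF gm]) auto
        finally show ?thesis using True t by (simp add: indicator_def)
      qed simp
    qed
    finally show ?thesis .
  qed
  have "ennreal (\<psi> a / 4) * J * ennreal (1 / a) \<le> ennreal (\<psi> s) * (ennreal (1/2) * J * ennreal (1/a))"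
  proof -
    have "ennreal (\<psi> a / 4) \<le> ennreal (\<psi> s) * ennreal (1/2)"
    proof -
      have "ennreal (\<psi> s) * ennreal (1/2) = ennreal (\<psi> s * (1/2))"
        using psa pa by (subst ennreal_mult[symmetric]) auto
      then show ?thesis using psa pa by (simp add: ennreal_leI)
    qed
    then show ?thesis by (metis mult.assoc mult_right_mono zero_le)
  qed
  also have "\<dots> \<le> ennreal (\<psi> s) * dstar R g a"
    unfolding dstar_def using Jlow a0 by (intro mult_left_mono) (simp_all add: div_ennreal_eq mult_right_mono)
  also have "\<dots> \<le> ennreal (\<psi> s) * rearr R (dstar R g) s"
    using s aI by (intro mult_left_mono rearr_ge[OF dstar_mono_cond]) auto
  also have "\<dots> \<le> Tpsi R \<psi> (dstar R g) t * ennreal (\<psi> t)"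
    using T_ge[of t s R \<psi> "dstar R g"] s sR pt by (simp add: ediv_le_iff)
  also have "\<dots> \<le> ennreal (2 * C / \<psi> t) * ennreal (\<psi> t)" using rhs by (rule mult_right_mono) simp
  also have "\<dots> = ennreal (2 * C)" using pt C by (simp add: ennreal_mult[symmetric])
  finally have 1: "ennreal (\<psi> a / 4) * J * ennreal (1 / a) \<le> ennreal (2 * C)" .
  have "J = ennreal (4 * a / \<psi> a) * (ennreal (\<psi> a / 4) * J * ennreal (1 / a))"
  proof -
    have "ennreal (4 * a / \<psi> a) * ennreal (\<psi> a / 4) * ennreal (1 / a) = 1"
      using pa a0 by (simp add: ennreal_mult[symmetric])
    then show ?thesis by (metis mult.commute mult.left_commute mult_1)
  qed
  also have "\<dots> \<le> ennreal (4 * a / \<psi> a) * ennreal (2 * C)" using 1 by (rule mult_left_mono) simp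
  also have "\<dots> = ennreal (8 * C * a / \<psi> a)" using pa a0 C by (simp add: ennreal_mult[symmetric])
  finally show ?thesis unfolding J_def .
qed


lemma ii_rev:
  assumes q: "quasiconcave R \<psi>" and C: "0 < C"
    and hyp: "\<forall>f :: real \<Rightarrow> real. f \<in> borel_measurable (restrict_space lebesgue (Ioo0 R)) \<longrightarrow>
             (\<forall>t \<in> Ioo0 R. Tpsi R \<psi> (dstar R (\<lambda>x. ennreal \<bar>f x\<bar>)) t
                 \<le> ennreal C * (Tpsi R \<psi> (\<lambda>x. ennreal \<bar>f x\<bar>) t + dstar R (\<lambda>x. ennreal \<bar>f x\<bar>) t))"
  shows "B_condition R \<psi>"
  unfolding B_condition_def
proof (intro exI[of _ "8 * C + 1"] conjI ballI)
  show "0 < 8 * C + 1" using C by simp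
  fix a assume aI: "a \<in> Ioo0 R"
  have a0: "0 < a" and aR: "ereal a < R" using aI by (auto simp: Ioo0_def)
  have pa: "0 < \<psi> a" using qc_pos[OF q aI] .
  define fn where "fn = (\<lambda>(n::nat) x. ennreal (1 / \<psi> x) * indicator {a / (2 * (real n + 2))<..<a/2} x)"
  have meas: "\<And>n. fn n \<in> borel_measurable lborel"
  proof -
    fix n
    have "(\<lambda>x. ennreal (1 / \<psi> x) * indicator {a / (2 * (real n + 2))<..<a/2} x) \<in> borel_measurable borel"
    proof -
      have h: "0 < a / (2 * (real n + 2))" using a0 by (intro divide_pos_pos) auto
      have sub: "{a / (2 * (real n + 2))<..<a/2} \<subseteq> {0..a}"
      proof
        fix x assume "x \<in> {a / (2 * (real n + 2))<..<a/2}"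
        then have "a / (2 * (real n + 2)) < x" "x < a/2" by auto
        with h a0 have "0 \<le> x" "x \<le> a" by linarith+
        then show "x \<in> {0..a}" by simp
      qed
      show ?thesis using a0 aR sub by (intro inv_psi_meas[OF q, of a]) auto
    qed
    then show "fn n \<in> borel_measurable lborel" by (simp add: fn_def)
  qed
  have inc: "incseq fn"
  proof (rule incseq_SucI, rule le_funI)
    fix n x
    have "a / (2 * (real (Suc n) + 2)) \<le> a / (2 * (real n + 2))" using a0 by (intro divide_left_mono) auto
    then show "fn n x \<le> fn (Suc n) x" unfolding fn_def
      by (intro mult_left_mono) (auto simp: indicator_def)
  qed
  have each: "\<And>n. integral\<^sup>N lborel (fn n) \<le> ennreal (8 * C * a / \<psi> a)"
  proof -
    fix n :: nat
    have "0 < a / (2 * (real n + 2))" using a0 by simp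
    moreover have "a / (2 * (real n + 2)) < a / 2" using a0 by (intro divide_strict_left_mono) auto
    ultimately show "integral\<^sup>N lborel (fn n) \<le> ennreal (8 * C * a / \<psi> a)"
      unfolding fn_def by (intro ii_rev_J[OF q C hyp aI]) auto
  qed
  have "Gi \<psi> (a/2) \<le> (\<integral>\<^sup>+ x. (SUP n. fn n x) \<partial>lborel)"
    unfolding Gi_def
  proof (intro nn_integral_mono)
    fix x
    show "ennreal (1 / \<psi> x) * indicator {0<..<a/2} x \<le> (SUP n. fn n x)"
    proof (cases "0 < x \<and> x < a/2")
      case True
      obtain n :: nat where n: "a / (2 * x) < real n" using reals_Archimedean2 by blast
      have "a < 2 * x * real n" using n True by (simp add: field_simps)
      then have "a < 2 * x * (real n + 2)" using True by (smt (verit) mult_left_mono)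
      then have "a / (2 * (real n + 2)) < x" using True by (simp add: field_simps)
      then have "ennreal (1 / \<psi> x) * indicator {0<..<a/2} x = fn n x" using True by (simp add: fn_def indicator_def)
      also have "\<dots> \<le> (SUP n. fn n x)" by (rule SUP_upper) simp
      finally show ?thesis .
    qed simp
  qed
  also have "\<dots> = (SUP n. integral\<^sup>N lborel (fn n))" by (rule nn_integral_monotone_convergence_SUP[OF inc meas])
  also have "\<dots> \<le> ennreal (8 * C * a / \<psi> a)" by (rule SUP_least) (rule each)
  finally have G2: "Gi \<psi> (a/2) \<le> ennreal (8 * C * a / \<psi> a)" .
  have "Gi \<psi> a = Gi \<psi> (a/2) + (\<integral>\<^sup>+ x. ennreal (1 / \<psi> x) * indicator {a/2..<a} x \<partial>lborel)"
    using a0 aR by (intro Gi_split[OF q]) auto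
  also have "\<dots> \<le> ennreal (8 * C * a / \<psi> a) + ennreal (2 * (a - a/2) / \<psi> a)"
    using a0 aR by (intro add_mono G2 Gi_tail[OF q]) auto
  also have "\<dots> = ennreal ((8 * C + 1) / \<psi> a) * ennreal a"
    using a0 pa C by (simp add: ennreal_mult[symmetric] ennreal_plus[symmetric] field_simps del: ennreal_plus)
  finally show "(\<integral>\<^sup>+ s\<in>{0<..<a}. ennreal (1 / \<psi> s) \<partial>lborel) / ennreal a \<le> ennreal ((8 * C + 1) / \<psi> a)"
    unfolding Gi_def using a0 by (simp add: ediv_le_iff)
qed


theorem lemma4p1:
  fixes R :: ereal and \<psi> :: "real \<Rightarrow> real"
  assumes "0 < R" and "quasiconcave R \<psi>"
  shows "((\<exists>C>0. \<forall>f :: real \<Rightarrow> real. f \<in> borel_measurable (restrict_space lebesgue (Ioo0 R)) \<longrightarrow>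
             (\<forall>t \<in> Ioo0 R.
               dstar R (Tpsi R \<psi> (\<lambda>x. ennreal \<bar>f x\<bar>)) t
                 \<le> ennreal C * (Tpsi R \<psi> (\<lambda>x. ennreal \<bar>f x\<bar>) t + dstar R (\<lambda>x. ennreal \<bar>f x\<bar>) t)))
          \<longleftrightarrow> B_condition R \<psi>)
       \<and> ((\<exists>c C. 0 < c \<and> c \<le> C \<and> (\<forall>f :: real \<Rightarrow> real. f \<in> borel_measurable (restrict_space lebesgue (Ioo0 R)) \<longrightarrow>
             (\<forall>t \<in> Ioo0 R.
               ennreal c * (Tpsi R \<psi> (\<lambda>x. ennreal \<bar>f x\<bar>) t + dstar R (\<lambda>x. ennreal \<bar>f x\<bar>) t)
                 \<le> Tpsi R \<psi> (dstar R (\<lambda>x. ennreal \<bar>f x\<bar>)) t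
               \<and> Tpsi R \<psi> (dstar R (\<lambda>x. ennreal \<bar>f x\<bar>)) t
                 \<le> ennreal C * (Tpsi R \<psi> (\<lambda>x. ennreal \<bar>f x\<bar>) t + dstar R (\<lambda>x. ennreal \<bar>f x\<bar>) t))))
          \<longleftrightarrow> B_condition R \<psi>)"
proof -
  note q = assms(2)
  have fromB: "\<exists>K>0. \<forall>t \<in> Ioo0 R. Gi \<psi> t / ennreal t \<le> ennreal (K / \<psi> t)" if "B_condition R \<psi>"
    using that unfolding B_condition_def Gi_def .
  show ?thesis
  proof (intro conjI iffI)
    assume "\<exists>C>0. \<forall>f :: real \<Rightarrow> real. f \<in> borel_measurable (restrict_space lebesgue (Ioo0 R)) \<longrightarrow>
             (\<forall>t \<in> Ioo0 R.
               dstar R (Tpsi R \<psi> (\<lambda>x. ennreal \<bar>f x\<bar>)) t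
                 \<le> ennreal C * (Tpsi R \<psi> (\<lambda>x. ennreal \<bar>f x\<bar>) t + dstar R (\<lambda>x. ennreal \<bar>f x\<bar>) t))"
    then obtain C where "0 < C" and "\<forall>f :: real \<Rightarrow> real. f \<in> borel_measurable (restrict_space lebesgue (Ioo0 R)) \<longrightarrow>
             (\<forall>t \<in> Ioo0 R.
               dstar R (Tpsi R \<psi> (\<lambda>x. ennreal \<bar>f x\<bar>)) t
                 \<le> ennreal C * (Tpsi R \<psi> (\<lambda>x. ennreal \<bar>f x\<bar>) t + dstar R (\<lambda>x. ennreal \<bar>f x\<bar>) t))" by blast
    then show "B_condition R \<psi>" by (rule i_rev[OF q])
  next
    assume "B_condition R \<psi>"
    then obtain K where K: "0 < K" and BK: "\<forall>t \<in> Ioo0 R. Gi \<psi> t / ennreal t \<le> ennreal (K / \<psi> t)"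
      using fromB by blast
    show "\<exists>C>0. \<forall>f :: real \<Rightarrow> real. f \<in> borel_measurable (restrict_space lebesgue (Ioo0 R)) \<longrightarrow>
             (\<forall>t \<in> Ioo0 R.
               dstar R (Tpsi R \<psi> (\<lambda>x. ennreal \<bar>f x\<bar>)) t
                 \<le> ennreal C * (Tpsi R \<psi> (\<lambda>x. ennreal \<bar>f x\<bar>) t + dstar R (\<lambda>x. ennreal \<bar>f x\<bar>) t))"
      using K by (intro exI[of _ "4 * K"]) (auto intro: i_upper[OF q K BK])
  next
    assume "\<exists>c C. 0 < c \<and> c \<le> C \<and> (\<forall>f :: real \<Rightarrow> real. f \<in> borel_measurable (restrict_space lebesgue (Ioo0 R)) \<longrightarrow>
             (\<forall>t \<in> Ioo0 R.
               ennreal c * (Tpsi R \<psi> (\<lambda>x. ennreal \<bar>f x\<bar>) t + dstar R (\<lambda>x. ennreal \<bar>f x\<bar>) t)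
                 \<le> Tpsi R \<psi> (dstar R (\<lambda>x. ennreal \<bar>f x\<bar>)) t
               \<and> Tpsi R \<psi> (dstar R (\<lambda>x. ennreal \<bar>f x\<bar>)) t
                 \<le> ennreal C * (Tpsi R \<psi> (\<lambda>x. ennreal \<bar>f x\<bar>) t + dstar R (\<lambda>x. ennreal \<bar>f x\<bar>) t)))"
    then obtain c C where c: "0 < c" "c \<le> C" and h: "\<forall>f :: real \<Rightarrow> real. f \<in> borel_measurable (restrict_space lebesgue (Ioo0 R)) \<longrightarrow>
             (\<forall>t \<in> Ioo0 R.
               ennreal c * (Tpsi R \<psi> (\<lambda>x. ennreal \<bar>f x\<bar>) t + dstar R (\<lambda>x. ennreal \<bar>f x\<bar>) t)
                 \<le> Tpsi R \<psi> (dstar R (\<lambda>x. ennreal \<bar>f x\<bar>)) t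
               \<and> Tpsi R \<psi> (dstar R (\<lambda>x. ennreal \<bar>f x\<bar>)) t
                 \<le> ennreal C * (Tpsi R \<psi> (\<lambda>x. ennreal \<bar>f x\<bar>) t + dstar R (\<lambda>x. ennreal \<bar>f x\<bar>) t))" by blast
    have C0: "0 < C" using c by simp
    have "\<forall>f :: real \<Rightarrow> real. f \<in> borel_measurable (restrict_space lebesgue (Ioo0 R)) \<longrightarrow>
             (\<forall>t \<in> Ioo0 R. Tpsi R \<psi> (dstar R (\<lambda>x. ennreal \<bar>f x\<bar>)) t
                 \<le> ennreal C * (Tpsi R \<psi> (\<lambda>x. ennreal \<bar>f x\<bar>) t + dstar R (\<lambda>x. ennreal \<bar>f x\<bar>) t))"
      using h by blast
    then show "B_condition R \<psi>" by (rule ii_rev[OF q C0])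
  next
    assume "B_condition R \<psi>"
    then obtain K where K: "0 < K" and BK: "\<forall>t \<in> Ioo0 R. Gi \<psi> t / ennreal t \<le> ennreal (K / \<psi> t)"
      using fromB by blast
    show "\<exists>c C. 0 < c \<and> c \<le> C \<and> (\<forall>f :: real \<Rightarrow> real. f \<in> borel_measurable (restrict_space lebesgue (Ioo0 R)) \<longrightarrow>
             (\<forall>t \<in> Ioo0 R.
               ennreal c * (Tpsi R \<psi> (\<lambda>x. ennreal \<bar>f x\<bar>) t + dstar R (\<lambda>x. ennreal \<bar>f x\<bar>) t)
                 \<le> Tpsi R \<psi> (dstar R (\<lambda>x. ennreal \<bar>f x\<bar>)) t
               \<and> Tpsi R \<psi> (dstar R (\<lambda>x. ennreal \<bar>f x\<bar>)) t
                 \<le> ennreal C * (Tpsi R \<psi> (\<lambda>x. ennreal \<bar>f x\<bar>) t + dstar R (\<lambda>x. ennreal \<bar>f x\<bar>) t)))"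
      apply (rule exI[of _ "1/4"], rule exI[of _ "1 + K"]) using K by (auto simp del: ennreal_plus intro: ii_lower[OF q] ii_upper[OF q K BK])
  qed
qed


end
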